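(* There is no Belyi map $\mathbb{P}^1\to\mathbb{P}^1$ with passport $[5\,3/2^4/2^4]$, and there is no Belyi map $\mathbb{P}^1\to\mathbb{P}^1$ with passport $[5\,4\,3/2^6/2^4\,4]$.
   Context: A Belyi map on a compact Riemann surface $X$ is a nonconstant meromorphic function $f:X\to\mathbb{P}^1$ unramified outside $\{0,1,\infty\}$. Its passport $[a_1^{p_1}\cdots/b_1^{q_1}\cdots/c_1^{r_1}\cdots]$ lists the ramification indices of the points in $f^{-1}(0)$, $f^{-1}(1)$, $f^{-1}(\infty)$ respectively, with exponents denoting repetition (so e.g. $[5\,3/2^4/2^4]$ means degree 8, fiber over $0$ consisting of points of ramification indices 5 and 3, and fibers over $1$ and $\infty$ each consisting of four points of ramification index 2). *)

theory Defs
  imports "HOL-Computational_Algebra.Computational_Algebra" "HOL-Library.Multiset"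
begin

text \<open>A meromorphic function on the Riemann sphere P^1 is a rational function p/q,
  with p, q coprime complex polynomials, q nonzero. Its degree is max(deg p, deg q).\<close>

definition rat_deg :: "complex poly \<Rightarrow> complex poly \<Rightarrow> nat" where
  "rat_deg p q = max (degree p) (degree q)"

definition rat_fun :: "complex poly \<Rightarrow> complex poly \<Rightarrow> bool" where
  "rat_fun p q \<longleftrightarrow> q \<noteq> 0 \<and> coprime p q"

definition nonconstant_rat_fun :: "complex poly \<Rightarrow> complex poly \<Rightarrow> bool" where
  "nonconstant_rat_fun p q \<longleftrightarrow> rat_fun p q \<and> rat_deg p q \<ge> 1"

text \<open>Multiset of ramification indices of the points of the fiber over a finite value c:
  finite points z with p(z) = c q(z), counted with index order z (p - c q), plus the point
  at infinity if it lies in the fiber, with index d - deg(p - c q).\<close>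

definition fiber_ram :: "complex poly \<Rightarrow> complex poly \<Rightarrow> complex \<Rightarrow> nat multiset" where
  "fiber_ram p q c =
     (let r = p - smult c q; d = rat_deg p q in
      image_mset (\<lambda>z. order z r) (mset_set {z. poly r z = 0})
      + (if degree r < d then {# d - degree r #} else {#}))"

definition fiber_ram_inf :: "complex poly \<Rightarrow> complex poly \<Rightarrow> nat multiset" where
  "fiber_ram_inf p q =
     (let d = rat_deg p q in
      image_mset (\<lambda>z. order z q) (mset_set {z. poly q z = 0})
      + (if degree q < d then {# d - degree q #} else {#}))"

definition belyi_P1 :: "complex poly \<Rightarrow> complex poly \<Rightarrow> bool" where
  "belyi_P1 p q \<longleftrightarrow> nonconstant_rat_fun p q \<and>
     (\<forall>c. c \<noteq> 0 \<and> c \<noteq> 1 \<longrightarrow> set_mset (fiber_ram p q c) \<subseteq> {1})"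

definition has_passport ::
  "complex poly \<Rightarrow> complex poly \<Rightarrow> nat multiset \<Rightarrow> nat multiset \<Rightarrow> nat multiset \<Rightarrow> bool" where
  "has_passport p q A B C \<longleftrightarrow>
     fiber_ram p q 0 = A \<and> fiber_ram p q 1 = B \<and> fiber_ram_inf p q = C"

end

theory Submission imports Defs begin

lemma mset_set_mono_sub: "A \<subseteq> B \<Longrightarrow> finite B \<Longrightarrow> mset_set A \<subseteq># mset_set B"
  unfolding subseteq_mset_def count_mset_set' by (auto intro: finite_subset)

lemma deg_sum:
  fixes p :: "complex poly"
  assumes "p \<noteq> 0"
  shows "(\<Sum>z\<in>{z. poly p z = 0}. order z p) = degree p"
proof -
  have "size (proots p) = sum (count (proots p)) (set_mset (proots p))"
    by (simp add: size_multiset_overloaded_eq)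
  also have "\<dots> = (\<Sum>z\<in>{z. poly p z = 0}. order z p)"
    using assms by simp
  finally show ?thesis using size_proots_complex[of p] by simp
qed

lemma even_square:
  fixes p :: "complex poly"
  assumes "p \<noteq> 0" "\<And>z. poly p z = 0 \<Longrightarrow> even (order z p)"
  shows "\<exists>R. p = smult (lead_coeff p) (R^2)"
proof -
  define R where "R = (\<Prod>z|poly p z = 0. [:-z, 1:] ^ (order z p div 2))"
  have "R^2 = (\<Prod>z|poly p z = 0. ([:-z, 1:] ^ (order z p div 2))^2)"
    unfolding R_def by (simp add: prod_power_distrib)
  also have "\<dots> = (\<Prod>z|poly p z = 0. [:-z, 1:] ^ order z p)"
  proof (rule prod.cong[OF refl])
    fix z assume "z \<in> {z. poly p z = 0}"
    then have "even (order z p)" using assms by auto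
    then show "([:-z, 1:] ^ (order z p div 2))^2 = [:-z, 1:] ^ order z p"
      by (simp add: power_mult[symmetric])
  qed
  finally show ?thesis using complex_poly_decompose[of p] by metis
qed

lemma sub_add_mset:
  assumes "N \<subseteq># add_mset a A"
  shows "N \<subseteq># A \<or> (\<exists>N'. N = add_mset a N' \<and> N' \<subseteq># A)"
proof (cases "a \<in># N")
  case True
  then obtain N' where "N = add_mset a N'" by (metis mset_add)
  then show ?thesis using assms by auto
next
  case False
  have "N \<subseteq># A" unfolding subseteq_mset_def
  proof
    fix x
    have "count N x \<le> count (add_mset a A) x" using assms by (simp add: subseteq_mset_def)
    then show "count N x \<le> count A x" using False by (cases "x = a") (auto simp: not_in_iff)
  qed
  then show ?thesis by simp
qed

lemma no_sub1: "N \<subseteq># {#5::nat, 3#} \<Longrightarrow> sum_mset N \<noteq> 4"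
  apply (drule sub_add_mset)
  apply (elim disjE exE conjE)
   apply (drule sub_add_mset)
   apply (elim disjE exE conjE)
    apply simp
   apply simp
  apply (drule sub_add_mset)
  apply (elim disjE exE conjE)
   apply simp
  apply simp
  done

lemma no_sub2: "N \<subseteq># {#5::nat, 4, 3#} \<Longrightarrow> sum_mset N \<noteq> 6"
  by (auto dest!: sub_add_mset)

lemma rat_deg_ge: "degree p \<le> rat_deg p q" "degree q \<le> rat_deg p q"
  by (auto simp: rat_deg_def)

lemma roots_in_fiber:
  assumes "p - smult c q \<noteq> 0" "poly (p - smult c q) z = 0"
  shows "order z (p - smult c q) \<in># fiber_ram p q c"
proof -
  have "finite {z. poly (p - smult c q) z = 0}" using assms(1) by (rule poly_roots_finite)
  then show ?thesis using assms unfolding fiber_ram_def Let_def by auto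
qed

lemma roots_in_fiber_inf:
  assumes "q \<noteq> 0" "poly q z = 0"
  shows "order z q \<in># fiber_ram_inf p q"
proof -
  have "finite {z. poly q z = 0}" using assms(1) by (rule poly_roots_finite)
  then show ?thesis using assms unfolding fiber_ram_inf_def Let_def by auto
qed

lemma fiber_sum:
  assumes "p - smult c q \<noteq> 0"
  shows "sum_mset (fiber_ram p q c) = rat_deg p q"
proof -
  let ?r = "p - smult c q"
  have fin: "finite {z. poly ?r z = 0}" using assms by (rule poly_roots_finite)
  have "degree ?r \<le> max (degree p) (degree (smult c q))" by (rule degree_diff_le_max)
  also have "\<dots> \<le> rat_deg p q" using degree_smult_le[of c q] by (auto simp: rat_deg_def)
  finally have le: "degree ?r \<le> rat_deg p q" .
  have "sum_mset (image_mset (\<lambda>z. order z ?r) (mset_set {z. poly ?r z = 0})) = degree ?r"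
    using deg_sum[OF assms] by (simp add: sum_unfold_sum_mset)
  then show ?thesis using le unfolding fiber_ram_def Let_def by auto
qed

lemma key:
  assumes rf: "rat_fun p q" and d1: "rat_deg p q \<ge> 1" and dm: "rat_deg p q = 2 * m"
    and ev1: "\<forall>k\<in>#fiber_ram p q 1. even k" and evi: "\<forall>k\<in>#fiber_ram_inf p q. even k"
  shows "\<exists>N. N \<subseteq># fiber_ram p q 0 \<and> sum_mset N = m"
proof -
  have q0: "q \<noteq> 0" and cop: "coprime p q" using rf by (auto simp: rat_fun_def)
  have p0: "p \<noteq> 0"
  proof
    assume "p = 0"
    then have "is_unit q" using cop by simp
    then have "degree q = 0" using q0 is_unit_iff_degree by blast
    then show False using d1 \<open>p = 0\<close> by (simp add: rat_deg_def)
  qed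
  have pq0: "p - q \<noteq> 0"
  proof
    assume "p - q = 0"
    then have "p = q" by simp
    then have "is_unit q" using cop by simp
    then have "degree q = 0" using q0 is_unit_iff_degree by blast
    then show False using d1 \<open>p = q\<close> by (simp add: rat_deg_def)
  qed
  have "\<exists>R. p - q = smult (lead_coeff (p - q)) (R^2)"
  proof (rule even_square[OF pq0])
    fix z assume "poly (p - q) z = 0"
    then have "order z (p - smult 1 q) \<in># fiber_ram p q 1"
      using roots_in_fiber[of p 1 q z] pq0 by simp
    then show "even (order z (p - q))" using ev1 by auto
  qed
  then obtain R where R: "p - q = smult (lead_coeff (p - q)) (R^2)" by blast
  define c1 where "c1 = lead_coeff (p - q)"
  have c1: "c1 \<noteq> 0" using pq0 unfolding c1_def by (metis leading_coeff_0_iff)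
  have "\<exists>Q. q = smult (lead_coeff q) (Q^2)"
  proof (rule even_square[OF q0])
    fix z assume "poly q z = 0"
    then have "order z q \<in># fiber_ram_inf p q"
      using roots_in_fiber_inf[of q z p] q0 by simp
    then show "even (order z q)" using evi by auto
  qed
  then obtain Q where Q: "q = smult (lead_coeff q) (Q^2)" by blast
  define c2 where "c2 = lead_coeff q"
  have c2: "c2 \<noteq> 0" using q0 by (simp add: c2_def)
  have R0: "R \<noteq> 0" using R pq0 by auto
  have Q0: "Q \<noteq> 0" using Q q0 by auto
  have degR: "degree (p - q) = 2 * degree R"
    using R R0 c1 unfolding c1_def by (metis degree_smult_eq degree_power_eq mult.commute)
  have degQ: "degree q = 2 * degree Q"
    using Q Q0 c2 unfolding c2_def by (metis degree_smult_eq degree_power_eq mult.commute)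
  have "degree (p - q) \<le> rat_deg p q"
    using degree_diff_le_max[of p q] by (simp add: rat_deg_def)
  then have Rm: "degree R \<le> m" using degR dm by simp
  have Qm: "degree Q \<le> m" using degQ dm by (simp add: rat_deg_def)
  have "degree p = degree ((p - q) + q)" by simp
  also have "\<dots> \<le> max (degree (p - q)) (degree q)" by (rule degree_add_le_max)
  finally have "rat_deg p q \<le> max (degree (p - q)) (degree q)"
    by (simp add: rat_deg_def)
  then have RQm: "degree R = m \<or> degree Q = m" using degR degQ dm Rm Qm by auto
  define w where "w = csqrt (- c2 / c1)"
  have w2: "w^2 = - c2 / c1" unfolding w_def by simp
  have w0: "w \<noteq> 0" using w2 c1 c2 by auto
  define U where "U = R + smult w Q"
  define V where "V = R - smult w Q"
  have cw: "c1 * w^2 = - c2" using w2 c1 by (simp add: field_simps)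
  have pUV: "p = smult c1 (U * V)"
  proof -
    have "poly p x = poly (smult c1 (U * V)) x" for x
    proof -
      have "poly (p - q) x = c1 * (poly R x)^2" using R by (metis c1_def poly_power poly_smult)
      moreover have "poly q x = c2 * (poly Q x)^2" using Q by (metis c2_def poly_power poly_smult)
      ultimately have "poly p x = c1 * (poly R x)^2 + c2 * (poly Q x)^2" by (simp add: diff_eq_eq)
      also have "\<dots> = c1 * (poly R x)^2 - (c1 * w^2) * (poly Q x)^2" using cw by simp
      also have "\<dots> = poly (smult c1 (U * V)) x" by (simp add: U_def V_def algebra_simps power2_eq_square)
      finally show ?thesis .
    qed
    then have "poly p = poly (smult c1 (U * V))" by (intro ext) simp
    then show ?thesis by (simp only: poly_eq_poly_eq_iff)
  qed
  have Um: "degree U \<le> m" unfolding U_def using Rm Qm degree_add_le degree_smult_le order_trans by metis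
  have Vm: "degree V \<le> m" unfolding V_def using Rm Qm degree_diff_le degree_smult_le order_trans by metis
  have UV: "degree U = m \<or> degree V = m"
  proof (rule ccontr)
    assume "\<not> ?thesis"
    then have lt: "degree U < m" "degree V < m" using Um Vm by auto
    have "R = smult (1/2) (U + V)" by (rule poly_eqI) (simp only: U_def V_def coeff_add coeff_diff coeff_smult, simp add: field_simps)
    then have "degree R \<le> degree (U + V)" using degree_smult_le by metis
    moreover have "degree (U + V) \<le> max (degree U) (degree V)" by (rule degree_add_le_max)
    ultimately have dR: "degree R < m" using lt by auto
    have "Q = smult (1/(2*w)) (U - V)" using w0
      by (intro poly_eqI) (simp only: U_def V_def coeff_add coeff_diff coeff_smult, simp add: field_simps)
    then have "degree Q \<le> degree (U - V)" using degree_smult_le by metis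
    moreover have "degree (U - V) \<le> max (degree U) (degree V)" by (rule degree_diff_le_max)
    ultimately have "degree Q < m" using lt by auto
    then show False using RQm dR by auto
  qed
  have nocommon: "\<not> (poly U z = 0 \<and> poly V z = 0)" for z
  proof
    assume a: "poly U z = 0 \<and> poly V z = 0"
    then have "poly R z = 0" "poly Q z = 0" using w0 by (auto simp: U_def V_def)
    have "poly q z = 0" using \<open>poly Q z = 0\<close> by (subst Q) simp
    moreover have "poly (p - q) z = 0" using \<open>poly R z = 0\<close> by (subst R) simp
    ultimately have "poly q z = 0" "poly p z = 0" by auto
    then show False using coprime_poly_0[OF cop] by auto
  qed
  obtain W W' where WW: "p = smult c1 (W * W')" "degree W = m" "\<And>z. poly W z = 0 \<Longrightarrow> poly W' z \<noteq> 0"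
  proof (cases "degree U = m")
    case True
    then show ?thesis using pUV nocommon by (intro that[of U V]) auto
  next
    case False
    then have "degree V = m" using UV by auto
    moreover have "p = smult c1 (V * U)" using pUV by (simp add: mult.commute)
    ultimately show ?thesis using nocommon by (intro that[of V U]) auto
  qed
  have W0: "W \<noteq> 0" "W' \<noteq> 0" using WW p0 d1 dm by auto
  have ord: "order z p = order z W" if "poly W z = 0" for z
  proof -
    have "order z p = order z (W * W')" using WW c1 order_smult by metis
    also have "\<dots> = order z W + order z W'" using W0 by (simp add: order_mult)
    also have "order z W' = 0" using WW(3)[OF that] by (rule order_0I)
    finally show ?thesis by simp
  qed
  have sub: "{z. poly W z = 0} \<subseteq> {z. poly p z = 0}" using WW by auto
  have finp: "finite {z. poly p z = 0}" using p0 by (rule poly_roots_finite)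
  define N where "N = image_mset (\<lambda>z. order z p) (mset_set {z. poly W z = 0})"
  have "N \<subseteq># image_mset (\<lambda>z. order z p) (mset_set {z. poly p z = 0})"
    unfolding N_def by (intro image_mset_subseteq_mono mset_set_mono_sub sub finp)
  also have "\<dots> \<subseteq># fiber_ram p q 0" unfolding fiber_ram_def Let_def by simp
  finally have "N \<subseteq># fiber_ram p q 0" .
  moreover have "sum_mset N = m"
  proof -
    have "sum_mset N = (\<Sum>z\<in>{z. poly W z = 0}. order z p)" unfolding N_def by (simp add: sum_unfold_sum_mset)
    also have "\<dots> = (\<Sum>z\<in>{z. poly W z = 0}. order z W)" using ord by (intro sum.cong) auto
    also have "\<dots> = m" using deg_sum[OF W0(1)] WW by simp
    finally show ?thesis .
  qed
  ultimately show ?thesis by blast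
qed

lemma pq_ne:
  assumes rf: "rat_fun p q" and d1: "rat_deg p q \<ge> 1"
  shows "p - smult 1 q \<noteq> 0"
proof
  have q0: "q \<noteq> 0" and cop: "coprime p q" using rf by (auto simp: rat_fun_def)
  assume "p - smult 1 q = 0"
  then have "p = q" by simp
  then have "is_unit q" using cop by simp
  then have "degree q = 0" using q0 is_unit_iff_degree by blast
  then show False using d1 \<open>p = q\<close> by (simp add: rat_deg_def)
qed

lemma general:
  assumes "belyi_P1 p q" "has_passport p q A B C"
    and "\<forall>k\<in>#B. even k" "\<forall>k\<in>#C. even k" "sum_mset B = 2 * m"
  shows "\<exists>N. N \<subseteq># A \<and> sum_mset N = m"
proof -
  have rf: "rat_fun p q" and d1: "rat_deg p q \<ge> 1"
    using assms(1) by (auto simp: belyi_P1_def nonconstant_rat_fun_def)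
  have fb: "fiber_ram p q 0 = A" "fiber_ram p q 1 = B" "fiber_ram_inf p q = C"
    using assms(2) by (auto simp: has_passport_def)
  have "rat_deg p q = 2 * m"
    using fiber_sum[OF pq_ne[OF rf d1]] fb assms(5) by simp
  then show ?thesis using key[OF rf d1] fb assms(3,4) by simp
qed

theorem mainTheorem12:
  shows "\<not> (\<exists>p q. belyi_P1 p q \<and>
            has_passport p q {#5, 3#} (replicate_mset 4 2) (replicate_mset 4 2))
       \<and> \<not> (\<exists>p q. belyi_P1 p q \<and>
            has_passport p q {#5, 4, 3#} (replicate_mset 6 2) (add_mset 4 (replicate_mset 4 2)))"
proof (intro conjI notI; elim exE conjE)
  fix p q
  assume "belyi_P1 p q" "has_passport p q {#5, 3#} (replicate_mset 4 2) (replicate_mset 4 2)"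
  moreover have "\<forall>k\<in>#replicate_mset 4 (2::nat). even k" "sum_mset (replicate_mset 4 (2::nat)) = 2 * 4"
    by simp_all
  ultimately obtain N :: "nat multiset" where "N \<subseteq># {#5, 3#}" "sum_mset N = 4"
    using general by metis
  then show False using no_sub1 by blast
next
  fix p q
  assume "belyi_P1 p q" "has_passport p q {#5, 4, 3#} (replicate_mset 6 2) (add_mset 4 (replicate_mset 4 2))"
  moreover have "\<forall>k\<in>#replicate_mset 6 (2::nat). even k" "\<forall>k\<in>#add_mset 4 (replicate_mset 4 (2::nat)). even k"
     "sum_mset (replicate_mset 6 (2::nat)) = 2 * 6"
    by simp_all
  ultimately obtain N :: "nat multiset" where "N \<subseteq># {#5, 4, 3#}" "sum_mset N = 6"
    using general by metis
  then show False using no_sub2 by blast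
qed

end
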